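(* The short exact sequence $1\to K\to G_2\xrightarrow{\phi}S_8\to1$ is split, i.e. there is a subgroup $H\subseteq G_2$ such that $\phi|_H:H\to S_8$ is an isomorphism.
   Context: The $2\times2\times2$ Rubik's cube consists of 8 corner cubelets, each carrying 3 colored stickers. Corner positions are numbered 1 = top-front-left, 2 = top-front-right, 3 = top-back-left, 4 = top-back-right, 5 = bottom-front-left, 6 = bottom-front-right, 7 = bottom-back-left, 8 = bottom-back-right. $G_2$ is the subgroup of the symmetric group on the 24 stickers generated by the six moves $u,d,f,b,l,r$ rotating respectively the top, bottom, front, back, left, right layer of four cubelets by $90^\circ$ clockwise as seen from outside facing that face. $\phi:G_2\to S_8$ is the (surjective) homomorphism recording the permutation of corner positions, and $K=\ker\phi$. *)

theory Defs
  imports "HOL-Algebra.Algebra"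
begin

datatype face = Up | Down | Front | Back | Left | Right

fun corner_faces :: "nat \<Rightarrow> face set" where
  "corner_faces c =
    (if c = 1 then {Up, Front, Left} else
     if c = 2 then {Up, Front, Right} else
     if c = 3 then {Up, Back, Left} else
     if c = 4 then {Up, Back, Right} else
     if c = 5 then {Down, Front, Left} else
     if c = 6 then {Down, Front, Right} else
     if c = 7 then {Down, Back, Left} else
     if c = 8 then {Down, Back, Right} else {})"

definition corner_of :: "face set \<Rightarrow> nat" where
  "corner_of S =
    (if S = {Up, Front, Left} then 1 else
     if S = {Up, Front, Right} then 2 else
     if S = {Up, Back, Left} then 3 else
     if S = {Up, Back, Right} then 4 else
     if S = {Down, Front, Left} then 5 else
     if S = {Down, Front, Right} then 6 else
     if S = {Down, Back, Left} then 7 else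
     if S = {Down, Back, Right} then 8 else 0)"

text \<open>The 24 stickers: a sticker is a pair (corner position, face it lies on).\<close>
definition Stickers :: "(nat \<times> face) set" where
  "Stickers = {(c, Y). c \<in> {1..8} \<and> Y \<in> corner_faces c}"

text \<open>Quarter turn of the whole space by 90 degrees clockwise as seen from
  outside facing face X, acting on face directions
  (coordinates: x = Right, y = Up, z = Front).\<close>
fun rotf :: "face \<Rightarrow> face \<Rightarrow> face" where
  "rotf Up Y = (case Y of Front \<Rightarrow> Left | Left \<Rightarrow> Back | Back \<Rightarrow> Right | Right \<Rightarrow> Front | _ \<Rightarrow> Y)"
| "rotf Down Y = (case Y of Front \<Rightarrow> Right | Right \<Rightarrow> Back | Back \<Rightarrow> Left | Left \<Rightarrow> Front | _ \<Rightarrow> Y)"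
| "rotf Front Y = (case Y of Up \<Rightarrow> Right | Right \<Rightarrow> Down | Down \<Rightarrow> Left | Left \<Rightarrow> Up | _ \<Rightarrow> Y)"
| "rotf Back Y = (case Y of Right \<Rightarrow> Up | Up \<Rightarrow> Left | Left \<Rightarrow> Down | Down \<Rightarrow> Right | _ \<Rightarrow> Y)"
| "rotf Right Y = (case Y of Up \<Rightarrow> Back | Back \<Rightarrow> Down | Down \<Rightarrow> Front | Front \<Rightarrow> Up | _ \<Rightarrow> Y)"
| "rotf Left Y = (case Y of Up \<Rightarrow> Front | Front \<Rightarrow> Down | Down \<Rightarrow> Back | Back \<Rightarrow> Up | _ \<Rightarrow> Y)"

definition move :: "face \<Rightarrow> (nat \<times> face) \<Rightarrow> (nat \<times> face)" where
  "move A = restrict (\<lambda>(c, Y).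
      if A \<in> corner_faces c then (corner_of (rotf A ` corner_faces c), rotf A Y) else (c, Y)) Stickers"

definition Sym24 :: "((nat \<times> face) \<Rightarrow> (nat \<times> face)) monoid" where
  "Sym24 = BijGroup Stickers"

definition G2 :: "((nat \<times> face) \<Rightarrow> (nat \<times> face)) monoid" where
  "G2 = Sym24\<lparr>carrier := generate Sym24 {move Up, move Down, move Front, move Back, move Left, move Right}\<rparr>"

definition phi :: "((nat \<times> face) \<Rightarrow> (nat \<times> face)) \<Rightarrow> (nat \<Rightarrow> nat)" where
  "phi g = (\<lambda>c. if c \<in> {1..8} then fst (g (c, SOME Y. Y \<in> corner_faces c)) else c)"

end

theory Submission
  imports Defs
begin

lemma face_univ: "(UNIV :: face set) = {Up,Down,Front,Back,Left,Right}"
  by (auto intro: face.exhaust)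

lemma face_set_eq: "(S::face set) = T \<longleftrightarrow> (\<forall>x\<in>{Up,Down,Front,Back,Left,Right}. x\<in>S \<longleftrightarrow> x\<in>T)"
  by (auto simp: face_univ[symmetric])

lemma c_cases: "(c::nat) \<in> {1..8} \<Longrightarrow> c=1 \<or> c=2 \<or> c=3 \<or> c=4 \<or> c=5 \<or> c=6 \<or> c=7 \<or> c=8"
  by auto

lemma mem_St: "(c, Y) \<in> Stickers \<longleftrightarrow> c \<in> {1..8} \<and> Y \<in> corner_faces c"
  by (simp add: Stickers_def)

declare corner_faces.simps[simp del]

lemma St_pair: "(c, Y) \<in> Stickers \<longleftrightarrow> (c, Y) \<in> {(1, Front), (1, Left), (1, Up), (2, Front), (2, Right), (2, Up), (3, Back), (3, Left), (3, Up), (4, Back), (4, Right), (4, Up), (5, Down), (5, Front), (5, Left), (6, Down), (6, Front), (6, Right), (7, Back), (7, Down), (7, Left), (8, Back), (8, Down), (8, Right)}"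
proof (cases "c \<in> {1..8}")
  case True
  then consider "c=1"|"c=2"|"c=3"|"c=4"|"c=5"|"c=6"|"c=7"|"c=8" using c_cases by blast
  then show ?thesis by cases (auto simp: mem_St corner_faces.simps)
next
  case False
  then have "c \<noteq> 1" "c \<noteq> 2" "c \<noteq> 3" "c \<noteq> 4" "c \<noteq> 5" "c \<noteq> 6" "c \<noteq> 7" "c \<noteq> 8" by auto
  then show ?thesis using False by (simp add: mem_St corner_faces.simps)
qed

lemma Stickers_list: "Stickers = {(1, Front), (1, Left), (1, Up), (2, Front), (2, Right), (2, Up), (3, Back), (3, Left), (3, Up), (4, Back), (4, Right), (4, Up), (5, Down), (5, Front), (5, Left), (6, Down), (6, Front), (6, Right), (7, Back), (7, Down), (7, Left), (8, Back), (8, Down), (8, Right)}"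
  unfolding set_eq_iff split_paired_All St_pair by blast

lemma move_tab:
  "move Up (1, Front) = (3, Left)"
  "move Up (Suc 0, Front) = (3, Left)"
  "move Up (1, Left) = (3, Back)"
  "move Up (Suc 0, Left) = (3, Back)"
  "move Up (1, Up) = (3, Up)"
  "move Up (Suc 0, Up) = (3, Up)"
  "move Up (2, Front) = (1, Left)"
  "move Up (2, Right) = (1, Front)"
  "move Up (2, Up) = (1, Up)"
  "move Up (3, Back) = (4, Right)"
  "move Up (3, Left) = (4, Back)"
  "move Up (3, Up) = (4, Up)"
  "move Up (4, Back) = (2, Right)"
  "move Up (4, Right) = (2, Front)"
  "move Up (4, Up) = (2, Up)"
  "move Up (5, Down) = (5, Down)"
  "move Up (5, Front) = (5, Front)"
  "move Up (5, Left) = (5, Left)"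
  "move Up (6, Down) = (6, Down)"
  "move Up (6, Front) = (6, Front)"
  "move Up (6, Right) = (6, Right)"
  "move Up (7, Back) = (7, Back)"
  "move Up (7, Down) = (7, Down)"
  "move Up (7, Left) = (7, Left)"
  "move Up (8, Back) = (8, Back)"
  "move Up (8, Down) = (8, Down)"
  "move Up (8, Right) = (8, Right)"
  "move Down (1, Front) = (1, Front)"
  "move Down (Suc 0, Front) = (1, Front)"
  "move Down (1, Left) = (1, Left)"
  "move Down (Suc 0, Left) = (1, Left)"
  "move Down (1, Up) = (1, Up)"
  "move Down (Suc 0, Up) = (1, Up)"
  "move Down (2, Front) = (2, Front)"
  "move Down (2, Right) = (2, Right)"
  "move Down (2, Up) = (2, Up)"
  "move Down (3, Back) = (3, Back)"
  "move Down (3, Left) = (3, Left)"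
  "move Down (3, Up) = (3, Up)"
  "move Down (4, Back) = (4, Back)"
  "move Down (4, Right) = (4, Right)"
  "move Down (4, Up) = (4, Up)"
  "move Down (5, Down) = (6, Down)"
  "move Down (5, Front) = (6, Right)"
  "move Down (5, Left) = (6, Front)"
  "move Down (6, Down) = (8, Down)"
  "move Down (6, Front) = (8, Right)"
  "move Down (6, Right) = (8, Back)"
  "move Down (7, Back) = (5, Left)"
  "move Down (7, Down) = (5, Down)"
  "move Down (7, Left) = (5, Front)"
  "move Down (8, Back) = (7, Left)"
  "move Down (8, Down) = (7, Down)"
  "move Down (8, Right) = (7, Back)"
  "move Front (1, Front) = (2, Front)"
  "move Front (Suc 0, Front) = (2, Front)"
  "move Front (1, Left) = (2, Up)"
  "move Front (Suc 0, Left) = (2, Up)"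
  "move Front (1, Up) = (2, Right)"
  "move Front (Suc 0, Up) = (2, Right)"
  "move Front (2, Front) = (6, Front)"
  "move Front (2, Right) = (6, Down)"
  "move Front (2, Up) = (6, Right)"
  "move Front (3, Back) = (3, Back)"
  "move Front (3, Left) = (3, Left)"
  "move Front (3, Up) = (3, Up)"
  "move Front (4, Back) = (4, Back)"
  "move Front (4, Right) = (4, Right)"
  "move Front (4, Up) = (4, Up)"
  "move Front (5, Down) = (1, Left)"
  "move Front (5, Front) = (1, Front)"
  "move Front (5, Left) = (1, Up)"
  "move Front (6, Down) = (5, Left)"
  "move Front (6, Front) = (5, Front)"
  "move Front (6, Right) = (5, Down)"
  "move Front (7, Back) = (7, Back)"
  "move Front (7, Down) = (7, Down)"
  "move Front (7, Left) = (7, Left)"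
  "move Front (8, Back) = (8, Back)"
  "move Front (8, Down) = (8, Down)"
  "move Front (8, Right) = (8, Right)"
  "move Back (1, Front) = (1, Front)"
  "move Back (Suc 0, Front) = (1, Front)"
  "move Back (1, Left) = (1, Left)"
  "move Back (Suc 0, Left) = (1, Left)"
  "move Back (1, Up) = (1, Up)"
  "move Back (Suc 0, Up) = (1, Up)"
  "move Back (2, Front) = (2, Front)"
  "move Back (2, Right) = (2, Right)"
  "move Back (2, Up) = (2, Up)"
  "move Back (3, Back) = (7, Back)"
  "move Back (3, Left) = (7, Down)"
  "move Back (3, Up) = (7, Left)"
  "move Back (4, Back) = (3, Back)"
  "move Back (4, Right) = (3, Up)"
  "move Back (4, Up) = (3, Left)"
  "move Back (5, Down) = (5, Down)"
  "move Back (5, Front) = (5, Front)"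
  "move Back (5, Left) = (5, Left)"
  "move Back (6, Down) = (6, Down)"
  "move Back (6, Front) = (6, Front)"
  "move Back (6, Right) = (6, Right)"
  "move Back (7, Back) = (8, Back)"
  "move Back (7, Down) = (8, Right)"
  "move Back (7, Left) = (8, Down)"
  "move Back (8, Back) = (4, Back)"
  "move Back (8, Down) = (4, Right)"
  "move Back (8, Right) = (4, Up)"
  "move Left (1, Front) = (5, Down)"
  "move Left (Suc 0, Front) = (5, Down)"
  "move Left (1, Left) = (5, Left)"
  "move Left (Suc 0, Left) = (5, Left)"
  "move Left (1, Up) = (5, Front)"
  "move Left (Suc 0, Up) = (5, Front)"
  "move Left (2, Front) = (2, Front)"
  "move Left (2, Right) = (2, Right)"
  "move Left (2, Up) = (2, Up)"
  "move Left (3, Back) = (1, Up)"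
  "move Left (3, Left) = (1, Left)"
  "move Left (3, Up) = (1, Front)"
  "move Left (4, Back) = (4, Back)"
  "move Left (4, Right) = (4, Right)"
  "move Left (4, Up) = (4, Up)"
  "move Left (5, Down) = (7, Back)"
  "move Left (5, Front) = (7, Down)"
  "move Left (5, Left) = (7, Left)"
  "move Left (6, Down) = (6, Down)"
  "move Left (6, Front) = (6, Front)"
  "move Left (6, Right) = (6, Right)"
  "move Left (7, Back) = (3, Up)"
  "move Left (7, Down) = (3, Back)"
  "move Left (7, Left) = (3, Left)"
  "move Left (8, Back) = (8, Back)"
  "move Left (8, Down) = (8, Down)"
  "move Left (8, Right) = (8, Right)"
  "move Right (1, Front) = (1, Front)"
  "move Right (Suc 0, Front) = (1, Front)"
  "move Right (1, Left) = (1, Left)"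
  "move Right (Suc 0, Left) = (1, Left)"
  "move Right (1, Up) = (1, Up)"
  "move Right (Suc 0, Up) = (1, Up)"
  "move Right (2, Front) = (4, Up)"
  "move Right (2, Right) = (4, Right)"
  "move Right (2, Up) = (4, Back)"
  "move Right (3, Back) = (3, Back)"
  "move Right (3, Left) = (3, Left)"
  "move Right (3, Up) = (3, Up)"
  "move Right (4, Back) = (8, Down)"
  "move Right (4, Right) = (8, Right)"
  "move Right (4, Up) = (8, Back)"
  "move Right (5, Down) = (5, Down)"
  "move Right (5, Front) = (5, Front)"
  "move Right (5, Left) = (5, Left)"
  "move Right (6, Down) = (2, Front)"
  "move Right (6, Front) = (2, Up)"
  "move Right (6, Right) = (2, Right)"
  "move Right (7, Back) = (7, Back)"
  "move Right (7, Down) = (7, Down)"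
  "move Right (7, Left) = (7, Left)"
  "move Right (8, Back) = (6, Down)"
  "move Right (8, Down) = (6, Front)"
  "move Right (8, Right) = (6, Right)"
  by (simp_all add: move_def Stickers_def corner_of_def face_set_eq corner_faces.simps)

lemma move_U_Bij: "move Up \<in> Bij Stickers"
proof -
  have m: "\<forall>x\<in>Stickers. move Up x \<in> Stickers"
    by (simp add: Stickers_list move_tab)
  have i: "\<forall>x\<in>Stickers. move Up (move Up (move Up (move Up x))) = x"
    by (simp add: Stickers_list move_tab)
  have "bij_betw (move Up) Stickers Stickers"
    by (rule bij_betw_byWitness[where f'="\<lambda>x. move Up (move Up (move Up x))"]) (use m i in auto)
  moreover have "move Up \<in> extensional Stickers" by (simp add: move_def)
  ultimately show ?thesis by (simp add: Bij_def)
qed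

lemma move_D_Bij: "move Down \<in> Bij Stickers"
proof -
  have m: "\<forall>x\<in>Stickers. move Down x \<in> Stickers"
    by (simp add: Stickers_list move_tab)
  have i: "\<forall>x\<in>Stickers. move Down (move Down (move Down (move Down x))) = x"
    by (simp add: Stickers_list move_tab)
  have "bij_betw (move Down) Stickers Stickers"
    by (rule bij_betw_byWitness[where f'="\<lambda>x. move Down (move Down (move Down x))"]) (use m i in auto)
  moreover have "move Down \<in> extensional Stickers" by (simp add: move_def)
  ultimately show ?thesis by (simp add: Bij_def)
qed

lemma move_F_Bij: "move Front \<in> Bij Stickers"
proof -
  have m: "\<forall>x\<in>Stickers. move Front x \<in> Stickers"
    by (simp add: Stickers_list move_tab)
  have i: "\<forall>x\<in>Stickers. move Front (move Front (move Front (move Front x))) = x"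
    by (simp add: Stickers_list move_tab)
  have "bij_betw (move Front) Stickers Stickers"
    by (rule bij_betw_byWitness[where f'="\<lambda>x. move Front (move Front (move Front x))"]) (use m i in auto)
  moreover have "move Front \<in> extensional Stickers" by (simp add: move_def)
  ultimately show ?thesis by (simp add: Bij_def)
qed

lemma move_B_Bij: "move Back \<in> Bij Stickers"
proof -
  have m: "\<forall>x\<in>Stickers. move Back x \<in> Stickers"
    by (simp add: Stickers_list move_tab)
  have i: "\<forall>x\<in>Stickers. move Back (move Back (move Back (move Back x))) = x"
    by (simp add: Stickers_list move_tab)
  have "bij_betw (move Back) Stickers Stickers"
    by (rule bij_betw_byWitness[where f'="\<lambda>x. move Back (move Back (move Back x))"]) (use m i in auto)
  moreover have "move Back \<in> extensional Stickers" by (simp add: move_def)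
  ultimately show ?thesis by (simp add: Bij_def)
qed

lemma move_L_Bij: "move Left \<in> Bij Stickers"
proof -
  have m: "\<forall>x\<in>Stickers. move Left x \<in> Stickers"
    by (simp add: Stickers_list move_tab)
  have i: "\<forall>x\<in>Stickers. move Left (move Left (move Left (move Left x))) = x"
    by (simp add: Stickers_list move_tab)
  have "bij_betw (move Left) Stickers Stickers"
    by (rule bij_betw_byWitness[where f'="\<lambda>x. move Left (move Left (move Left x))"]) (use m i in auto)
  moreover have "move Left \<in> extensional Stickers" by (simp add: move_def)
  ultimately show ?thesis by (simp add: Bij_def)
qed

lemma move_R_Bij: "move Right \<in> Bij Stickers"
proof -
  have m: "\<forall>x\<in>Stickers. move Right x \<in> Stickers"
    by (simp add: Stickers_list move_tab)
  have i: "\<forall>x\<in>Stickers. move Right (move Right (move Right (move Right x))) = x"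
    by (simp add: Stickers_list move_tab)
  have "bij_betw (move Right) Stickers Stickers"
    by (rule bij_betw_byWitness[where f'="\<lambda>x. move Right (move Right (move Right x))"]) (use m i in auto)
  moreover have "move Right \<in> extensional Stickers" by (simp add: move_def)
  ultimately show ?thesis by (simp add: Bij_def)
qed

definition facs :: "nat \<Rightarrow> face list" where
  "facs c = (if c = 1 then [Up, Left, Front] else if c = 2 then [Up, Front, Right] else
             if c = 3 then [Up, Back, Left] else if c = 4 then [Up, Right, Back] else
             if c = 5 then [Down, Front, Left] else if c = 6 then [Down, Right, Front] else
             if c = 7 then [Down, Left, Back] else if c = 8 then [Down, Back, Right] else [])"

definition fac :: "nat \<Rightarrow> nat \<Rightarrow> face" where
  "fac c k = facs c ! k"

definition lab :: "nat \<Rightarrow> face \<Rightarrow> nat" where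
  "lab c Y = (if Y = facs c ! 0 then 0 else if Y = facs c ! 1 then 1 else 2)"

definition lift :: "(nat \<Rightarrow> nat) \<Rightarrow> (nat \<times> face) \<Rightarrow> (nat \<times> face)" where
  "lift s = restrict (\<lambda>(c, Y). (s c, fac (s c) (lab c Y))) Stickers"

lemma k_cases: "(k::nat) < 3 \<Longrightarrow> k = 0 \<or> k = 1 \<or> k = 2" by auto

lemma fac_in: "c \<in> {1..8} \<Longrightarrow> k < 3 \<Longrightarrow> fac c k \<in> corner_faces c"
  using c_cases[of c] k_cases[of k] by (auto simp: fac_def facs_def corner_faces.simps)

lemma lab_lt: "lab c Y < 3" by (simp add: lab_def)

lemma fac_lab: "c \<in> {1..8} \<Longrightarrow> Y \<in> corner_faces c \<Longrightarrow> fac c (lab c Y) = Y"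
  using c_cases[of c] by (auto simp: fac_def facs_def lab_def corner_faces.simps)

lemma lab_fac: "c \<in> {1..8} \<Longrightarrow> k < 3 \<Longrightarrow> lab c (fac c k) = k"
  using c_cases[of c] k_cases[of k] by (auto simp: fac_def facs_def lab_def)

lemma lift_app: "(c, Y) \<in> Stickers \<Longrightarrow> lift s (c, Y) = (s c, fac (s c) (lab c Y))"
  by (simp add: lift_def)

lemma lift_mem: assumes s: "s permutes {1..8}" and x: "x \<in> Stickers" shows "lift s x \<in> Stickers"
proof -
  obtain c Y where xe: "x = (c, Y)" by (cases x)
  have c: "c \<in> {1..8}" using x xe by (simp add: mem_St)
  have sc: "s c \<in> {1..8}" using permutes_in_image[OF s] c by blast
  show ?thesis using x sc by (simp add: xe lift_app mem_St fac_in lab_lt)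
qed

lemma lift_comp: "s permutes {1..8} \<Longrightarrow> r permutes {1..8} \<Longrightarrow>
    compose Stickers (lift s) (lift r) = lift (s \<circ> r)"
proof (rule ext)
  fix x assume s: "s permutes {1..8}" and r: "r permutes {1..8}"
  show "compose Stickers (lift s) (lift r) x = lift (s \<circ> r) x"
  proof (cases "x \<in> Stickers")
    case True
    then obtain c Y where x: "x = (c, Y)" and c: "c \<in> {1..8}" and Y: "Y \<in> corner_faces c"
      by (cases x) (auto simp: mem_St)
    have rc: "r c \<in> {1..8}" using permutes_in_image[OF r] c by blast
    have m: "(r c, fac (r c) (lab c Y)) \<in> Stickers"
      using rc by (simp add: mem_St fac_in lab_lt)
    show ?thesis using True m rc
      by (simp add: compose_def x lift_app lab_fac lab_lt)
  next
    case False
    then show ?thesis by (simp add: compose_def lift_def)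
  qed
qed

lemma lift_id: "lift id = (\<lambda>x\<in>Stickers. x)"
proof (rule ext)
  fix x show "lift id x = (\<lambda>x\<in>Stickers. x) x"
    by (cases x) (auto simp: lift_def mem_St fac_lab)
qed

lemma lift_Bij: assumes s: "s permutes {1..8}" shows "lift s \<in> Bij Stickers"
proof -
  have si: "inv_into UNIV s permutes {1..8}" using s by (rule permutes_inv)
  have e1: "compose Stickers (lift (inv_into UNIV s)) (lift s) = (\<lambda>x\<in>Stickers. x)"
    using lift_comp[OF si s] permutes_inv_o(2)[OF s] lift_id by simp
  have e2: "compose Stickers (lift s) (lift (inv_into UNIV s)) = (\<lambda>x\<in>Stickers. x)"
    using lift_comp[OF s si] permutes_inv_o(1)[OF s] lift_id by simp
  have "bij_betw (lift s) Stickers Stickers"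
  proof (rule bij_betw_byWitness[where f'="lift (inv_into UNIV s)"])
    show "\<forall>a\<in>Stickers. lift (inv_into UNIV s) (lift s a) = a"
      using e1 by (metis compose_eq restrict_apply')
    show "\<forall>a\<in>Stickers. lift s (lift (inv_into UNIV s) a) = a"
      using e2 by (metis compose_eq restrict_apply')
    show "lift s ` Stickers \<subseteq> Stickers" using lift_mem[OF s] by auto
    show "lift (inv_into UNIV s) ` Stickers \<subseteq> Stickers" using lift_mem[OF si] by auto
  qed
  moreover have "lift s \<in> extensional Stickers" by (simp add: lift_def)
  ultimately show ?thesis by (simp add: Bij_def)
qed

lemma Sym24_mult: "f \<in> Bij Stickers \<Longrightarrow> g \<in> Bij Stickers \<Longrightarrow> f \<otimes>\<^bsub>Sym24\<^esub> g = compose Stickers f g"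
  by (simp add: Sym24_def BijGroup_def)

lemma Sym24_carrier: "carrier Sym24 = Bij Stickers"
  by (simp add: Sym24_def BijGroup_def)

lemma Sym24_one: "\<one>\<^bsub>Sym24\<^esub> = (\<lambda>x\<in>Stickers. x)"
  by (simp add: Sym24_def BijGroup_def)

abbreviation Mv where "Mv \<equiv> {move Up, move Down, move Front, move Back, move Left, move Right}"

lemma move_Bij: "move A \<in> Bij Stickers"
  by (cases A) (simp_all add: move_U_Bij move_D_Bij move_F_Bij move_B_Bij move_L_Bij move_R_Bij)

lemma move_Mv: "move A \<in> Mv"
  by (cases A) simp_all

fun evalw :: "face list \<Rightarrow> nat \<times> face \<Rightarrow> nat \<times> face" where
  "evalw [] x = x"
| "evalw (A # ws) x = move A (evalw ws x)"

definition idSt :: "nat \<times> face \<Rightarrow> nat \<times> face" where "idSt = (\<lambda>x\<in>Stickers. x)"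

fun prodw :: "face list \<Rightarrow> nat \<times> face \<Rightarrow> nat \<times> face" where
  "prodw [] = idSt"
| "prodw (A # ws) = compose Stickers (move A) (prodw ws)"

lemma prodw_Bij: "prodw ws \<in> Bij Stickers"
proof (induction ws)
  case Nil
  show ?case unfolding prodw.simps idSt_def by (rule id_Bij)
next
  case (Cons A ws)
  show ?case unfolding prodw.simps by (rule compose_Bij[OF move_Bij Cons.IH])
qed

lemma prodw_gen: "prodw ws \<in> generate Sym24 Mv"
proof (induction ws)
  case Nil
  have "\<one>\<^bsub>Sym24\<^esub> \<in> generate Sym24 Mv" by (rule generate.one)
  then show ?case unfolding prodw.simps idSt_def Sym24_one .
next
  case (Cons A ws)
  have "move A \<otimes>\<^bsub>Sym24\<^esub> prodw ws \<in> generate Sym24 Mv"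
    by (rule generate.eng[OF generate.incl[OF move_Mv] Cons.IH])
  then show ?case using Sym24_mult[OF move_Bij prodw_Bij] by simp
qed

lemma prodw_eval: "x \<in> Stickers \<Longrightarrow> prodw ws x = evalw ws x"
  by (induction ws) (simp_all add: compose_def idSt_def)

lemma transp_2: "lift (Transposition.transpose 1 2) = prodw [Front, Right, Up, Front, Front, Front, Right, Front, Up, Up, Front, Up, Right, Right, Up, Up, Up]"
proof (rule extensionalityI[where A=Stickers])
  show "lift (Transposition.transpose 1 2) \<in> extensional Stickers" by (simp add: lift_def)
  show "prodw [Front, Right, Up, Front, Front, Front, Right, Front, Up, Up, Front, Up, Right, Right, Up, Up, Up] \<in> extensional Stickers" using prodw_Bij by (simp add: Bij_def)
  have "\<forall>x\<in>Stickers. lift (Transposition.transpose 1 2) x = evalw [Front, Right, Up, Front, Front, Front, Right, Front, Up, Up, Front, Up, Right, Right, Up, Up, Up] x"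
    by (simp add: Stickers_list lift_def mem_St corner_faces.simps fac_def lab_def facs_def move_tab Transposition.transpose_def)
  then show "\<And>x. x \<in> Stickers \<Longrightarrow> lift (Transposition.transpose 1 2) x = prodw [Front, Right, Up, Front, Front, Front, Right, Front, Up, Up, Front, Up, Right, Right, Up, Up, Up] x"
    by (simp del: prodw.simps add: prodw_eval)
qed

lemma transp_3: "lift (Transposition.transpose 1 3) = prodw [Right, Right, Up, Right, Front, Front, Right, Up, Right, Right, Right, Front, Right, Front, Up, Up, Up]"
proof (rule extensionalityI[where A=Stickers])
  show "lift (Transposition.transpose 1 3) \<in> extensional Stickers" by (simp add: lift_def)
  show "prodw [Right, Right, Up, Right, Front, Front, Right, Up, Right, Right, Right, Front, Right, Front, Up, Up, Up] \<in> extensional Stickers" using prodw_Bij by (simp add: Bij_def)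
  have "\<forall>x\<in>Stickers. lift (Transposition.transpose 1 3) x = evalw [Right, Right, Up, Right, Front, Front, Right, Up, Right, Right, Right, Front, Right, Front, Up, Up, Up] x"
    by (simp add: Stickers_list lift_def mem_St corner_faces.simps fac_def lab_def facs_def move_tab Transposition.transpose_def)
  then show "\<And>x. x \<in> Stickers \<Longrightarrow> lift (Transposition.transpose 1 3) x = prodw [Right, Right, Up, Right, Front, Front, Right, Up, Right, Right, Right, Front, Right, Front, Up, Up, Up] x"
    by (simp del: prodw.simps add: prodw_eval)
qed

lemma transp_4: "lift (Transposition.transpose 1 4) = prodw [Front, Front, Up, Right, Right, Right, Up, Right, Front, Front, Right, Up, Up, Front, Front, Right, Up, Front, Up]"
proof (rule extensionalityI[where A=Stickers])
  show "lift (Transposition.transpose 1 4) \<in> extensional Stickers" by (simp add: lift_def)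
  show "prodw [Front, Front, Up, Right, Right, Right, Up, Right, Front, Front, Right, Up, Up, Front, Front, Right, Up, Front, Up] \<in> extensional Stickers" using prodw_Bij by (simp add: Bij_def)
  have "\<forall>x\<in>Stickers. lift (Transposition.transpose 1 4) x = evalw [Front, Front, Up, Right, Right, Right, Up, Right, Front, Front, Right, Up, Up, Front, Front, Right, Up, Front, Up] x"
    by (simp add: Stickers_list lift_def mem_St corner_faces.simps fac_def lab_def facs_def move_tab Transposition.transpose_def)
  then show "\<And>x. x \<in> Stickers \<Longrightarrow> lift (Transposition.transpose 1 4) x = prodw [Front, Front, Up, Right, Right, Right, Up, Right, Front, Front, Right, Up, Up, Front, Front, Right, Up, Front, Up] x"
    by (simp del: prodw.simps add: prodw_eval)
qed

lemma transp_5: "lift (Transposition.transpose 1 5) = prodw [Front, Up, Front, Right, Right, Front, Right, Up, Up, Right, Up, Front, Right, Right, Right]"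
proof (rule extensionalityI[where A=Stickers])
  show "lift (Transposition.transpose 1 5) \<in> extensional Stickers" by (simp add: lift_def)
  show "prodw [Front, Up, Front, Right, Right, Front, Right, Up, Up, Right, Up, Front, Right, Right, Right] \<in> extensional Stickers" using prodw_Bij by (simp add: Bij_def)
  have "\<forall>x\<in>Stickers. lift (Transposition.transpose 1 5) x = evalw [Front, Up, Front, Right, Right, Front, Right, Up, Up, Right, Up, Front, Right, Right, Right] x"
    by (simp add: Stickers_list lift_def mem_St corner_faces.simps fac_def lab_def facs_def move_tab Transposition.transpose_def)
  then show "\<And>x. x \<in> Stickers \<Longrightarrow> lift (Transposition.transpose 1 5) x = prodw [Front, Up, Front, Right, Right, Front, Right, Up, Up, Right, Up, Front, Right, Right, Right] x"
    by (simp del: prodw.simps add: prodw_eval)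
qed

lemma transp_6: "lift (Transposition.transpose 1 6) = prodw [Up, Front, Up, Right, Right, Up, Right, Front, Front, Right, Up, Front, Up, Up, Up, Right, Up, Up, Up]"
proof (rule extensionalityI[where A=Stickers])
  show "lift (Transposition.transpose 1 6) \<in> extensional Stickers" by (simp add: lift_def)
  show "prodw [Up, Front, Up, Right, Right, Up, Right, Front, Front, Right, Up, Front, Up, Up, Up, Right, Up, Up, Up] \<in> extensional Stickers" using prodw_Bij by (simp add: Bij_def)
  have "\<forall>x\<in>Stickers. lift (Transposition.transpose 1 6) x = evalw [Up, Front, Up, Right, Right, Up, Right, Front, Front, Right, Up, Front, Up, Up, Up, Right, Up, Up, Up] x"
    by (simp add: Stickers_list lift_def mem_St corner_faces.simps fac_def lab_def facs_def move_tab Transposition.transpose_def)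
  then show "\<And>x. x \<in> Stickers \<Longrightarrow> lift (Transposition.transpose 1 6) x = prodw [Up, Front, Up, Right, Right, Up, Right, Front, Front, Right, Up, Front, Up, Up, Up, Right, Up, Up, Up] x"
    by (simp del: prodw.simps add: prodw_eval)
qed

lemma transp_7: "lift (Transposition.transpose 1 7) = prodw [Down, Down, Down, Back, Left, Down, Down, Left, Back, Down, Down, Back, Left, Back, Down, Down, Down, Left, Down]"
proof (rule extensionalityI[where A=Stickers])
  show "lift (Transposition.transpose 1 7) \<in> extensional Stickers" by (simp add: lift_def)
  show "prodw [Down, Down, Down, Back, Left, Down, Down, Left, Back, Down, Down, Back, Left, Back, Down, Down, Down, Left, Down] \<in> extensional Stickers" using prodw_Bij by (simp add: Bij_def)
  have "\<forall>x\<in>Stickers. lift (Transposition.transpose 1 7) x = evalw [Down, Down, Down, Back, Left, Down, Down, Left, Back, Down, Down, Back, Left, Back, Down, Down, Down, Left, Down] x"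
    by (simp add: Stickers_list lift_def mem_St corner_faces.simps fac_def lab_def facs_def move_tab Transposition.transpose_def)
  then show "\<And>x. x \<in> Stickers \<Longrightarrow> lift (Transposition.transpose 1 7) x = prodw [Down, Down, Down, Back, Left, Down, Down, Left, Back, Down, Down, Back, Left, Back, Down, Down, Down, Left, Down] x"
    by (simp del: prodw.simps add: prodw_eval)
qed

lemma transp_8: "lift (Transposition.transpose 1 8) = prodw [Front, Up, Right, Right, Right, Front, Front, Right, Front, Front, Front, Right, Up, Front, Front, Right, Right]"
proof (rule extensionalityI[where A=Stickers])
  show "lift (Transposition.transpose 1 8) \<in> extensional Stickers" by (simp add: lift_def)
  show "prodw [Front, Up, Right, Right, Right, Front, Front, Right, Front, Front, Front, Right, Up, Front, Front, Right, Right] \<in> extensional Stickers" using prodw_Bij by (simp add: Bij_def)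
  have "\<forall>x\<in>Stickers. lift (Transposition.transpose 1 8) x = evalw [Front, Up, Right, Right, Right, Front, Front, Right, Front, Front, Front, Right, Up, Front, Front, Right, Right] x"
    by (simp add: Stickers_list lift_def mem_St corner_faces.simps fac_def lab_def facs_def move_tab Transposition.transpose_def)
  then show "\<And>x. x \<in> Stickers \<Longrightarrow> lift (Transposition.transpose 1 8) x = prodw [Front, Up, Right, Right, Right, Front, Front, Right, Front, Front, Front, Right, Up, Front, Front, Right, Right] x"
    by (simp del: prodw.simps add: prodw_eval)
qed

lemma lift_id_gen: "lift id \<in> generate Sym24 Mv"
proof -
  have "\<one>\<^bsub>Sym24\<^esub> \<in> generate Sym24 Mv" by (rule generate.one)
  then show ?thesis unfolding Sym24_one lift_id .
qed

lemma lift_gen_1k: assumes k: "k \<in> {1..8}" shows "lift (Transposition.transpose 1 k) \<in> generate Sym24 Mv"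
proof -
  consider "k=1"|"k=2"|"k=3"|"k=4"|"k=5"|"k=6"|"k=7"|"k=8" using c_cases[OF k] by blast
  then show ?thesis
  proof cases
    case 1 then show ?thesis using lift_id_gen by simp
  qed (simp_all only: transp_2 transp_3 transp_4 transp_5 transp_6 transp_7 transp_8 prodw_gen)
qed

lemma lift_mult_gen:
  assumes s: "s permutes {1..8}" and r: "r permutes {1..8}"
    and gs: "lift s \<in> generate Sym24 Mv" and gr: "lift r \<in> generate Sym24 Mv"
  shows "lift (s \<circ> r) \<in> generate Sym24 Mv"
proof -
  have "lift s \<otimes>\<^bsub>Sym24\<^esub> lift r \<in> generate Sym24 Mv" by (rule generate.eng[OF gs gr])
  then show ?thesis using Sym24_mult[OF lift_Bij[OF s] lift_Bij[OF r]] lift_comp[OF s r] by simp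
qed

lemma transp_decomp: "a \<noteq> 1 \<Longrightarrow> b \<noteq> 1 \<Longrightarrow> a \<noteq> b \<Longrightarrow>
  Transposition.transpose a b = Transposition.transpose 1 a \<circ> (Transposition.transpose 1 b \<circ> Transposition.transpose 1 a)"
  by (auto simp: fun_eq_iff Transposition.transpose_def)

lemma lift_transp_gen: assumes a: "a \<in> {1..8}" and b: "b \<in> {1..8}"
  shows "lift (Transposition.transpose a b) \<in> generate Sym24 Mv"
proof -
  have one: "(1::nat) \<in> {1..8}" by simp
  show ?thesis
  proof (cases "a = 1")
    case True then show ?thesis using lift_gen_1k[OF b] by simp
  next
    case a1: False
    show ?thesis
    proof (cases "b = 1")
      case True then show ?thesis using lift_gen_1k[OF a] by (simp add: transpose_commute)
    next
      case b1: False
      show ?thesis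
      proof (cases "a = b")
        case True then show ?thesis using lift_id_gen by simp
      next
        case False
        have pa: "Transposition.transpose 1 a permutes {1..8}" by (rule permutes_swap_id[OF one a])
        have pb: "Transposition.transpose 1 b permutes {1..8}" by (rule permutes_swap_id[OF one b])
        have g: "lift (Transposition.transpose 1 a \<circ> (Transposition.transpose 1 b \<circ> Transposition.transpose 1 a))
            \<in> generate Sym24 Mv"
          by (rule lift_mult_gen[OF pa permutes_compose[OF pa pb] lift_gen_1k[OF a]
                lift_mult_gen[OF pb pa lift_gen_1k[OF b] lift_gen_1k[OF a]]])
        then show ?thesis using transp_decomp[OF a1 b1 False] by simp
      qed
    qed
  qed
qed

lemma lift_perm_gen: assumes "s permutes {1..8}" shows "lift s \<in> generate Sym24 Mv"
proof -
  have fin: "finite {1..8::nat}" by simp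
  from assms fin show ?thesis
  proof (induction rule: permutes_induct)
    case id
    then show ?case by (rule lift_id_gen)
  next
    case (swap a b p)
    show ?case
      by (rule lift_mult_gen[OF permutes_swap_id[OF swap(1,2)] swap(4) lift_transp_gen[OF swap(1,2)] swap(5)])
  qed
qed

lemma phi_lift: assumes s: "s permutes {1..8}" shows "phi (lift s) = s"
proof (rule ext)
  fix c show "phi (lift s) c = s c"
  proof (cases "c \<in> {1..8}")
    case True
    have "fac c 0 \<in> corner_faces c" using True by (simp add: fac_in)
    then have "(SOME Y. Y \<in> corner_faces c) \<in> corner_faces c" by (rule someI)
    then have "(c, SOME Y. Y \<in> corner_faces c) \<in> Stickers" using True by (simp add: mem_St)
    then show ?thesis using True by (simp add: phi_def lift_app)
  next
    case False
    have "s c = c" using permutes_not_in[OF s False] .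
    moreover have "phi (lift s) c = c" unfolding phi_def using False by auto
    ultimately show ?thesis by simp
  qed
qed

theorem proposition2p6:
  shows "\<exists>H. subgroup H G2 \<and> phi \<in> iso (G2\<lparr>carrier := H\<rparr>) (sym_group 8)"
proof -
  have grp: "group Sym24" by (simp add: Sym24_def group_BijGroup)
  have MvC: "Mv \<subseteq> carrier Sym24" using move_Bij by (simp add: Sym24_carrier)
  have sub: "subgroup (generate Sym24 Mv) Sym24" by (rule group.generate_is_subgroup[OF grp MvC])
  have gG2: "group G2" unfolding G2_def by (rule subgroup.subgroup_is_group[OF sub grp])
  have cG2: "carrier G2 = generate Sym24 Mv" by (simp add: G2_def)
  have mG2: "\<And>x y. x \<otimes>\<^bsub>G2\<^esub> y = x \<otimes>\<^bsub>Sym24\<^esub> y" by (simp add: G2_def)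
  have hom: "lift \<in> hom (sym_group 8) G2"
  proof (rule homI)
    fix x assume "x \<in> carrier (sym_group 8)"
    then show "lift x \<in> carrier G2" by (simp add: sym_group_carrier cG2 lift_perm_gen)
  next
    fix x y assume x: "x \<in> carrier (sym_group 8)" and y: "y \<in> carrier (sym_group 8)"
    then have x': "x permutes {1..8}" and y': "y permutes {1..8}" by (simp_all add: sym_group_carrier)
    show "lift (x \<otimes>\<^bsub>sym_group 8\<^esub> y) = lift x \<otimes>\<^bsub>G2\<^esub> lift y"
      using lift_comp[OF x' y'] Sym24_mult[OF lift_Bij[OF x'] lift_Bij[OF y']]
      by (simp add: mG2 sym_group_mult)
  qed
  have gh: "group_hom (sym_group 8) G2 lift"
    unfolding group_hom_def group_hom_axioms_def using sym_group_is_group gG2 hom by simp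
  let ?H = "lift ` carrier (sym_group 8)"
  have subH: "subgroup ?H G2" by (rule group_hom.img_is_subgroup[OF gh])
  have iso: "phi \<in> iso (G2\<lparr>carrier := ?H\<rparr>) (sym_group 8)"
    unfolding iso_def
  proof (intro CollectI conjI)
    show "phi \<in> hom (G2\<lparr>carrier := ?H\<rparr>) (sym_group 8)"
    proof (rule homI)
      fix x assume "x \<in> carrier (G2\<lparr>carrier := ?H\<rparr>)"
      then obtain s where s: "s permutes {1..8}" and x: "x = lift s"
        by (auto simp: sym_group_carrier)
      show "phi x \<in> carrier (sym_group 8)" using s by (simp add: x phi_lift sym_group_carrier)
    next
      fix x y assume "x \<in> carrier (G2\<lparr>carrier := ?H\<rparr>)" "y \<in> carrier (G2\<lparr>carrier := ?H\<rparr>)"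
      then obtain s r where s: "s permutes {1..8}" and x: "x = lift s"
        and r: "r permutes {1..8}" and y: "y = lift r"
        by (auto simp: sym_group_carrier)
      have "x \<otimes>\<^bsub>G2\<lparr>carrier := ?H\<rparr>\<^esub> y = lift (s \<circ> r)"
        using lift_comp[OF s r] Sym24_mult[OF lift_Bij[OF s] lift_Bij[OF r]]
        by (simp add: x y mG2)
      then show "phi (x \<otimes>\<^bsub>G2\<lparr>carrier := ?H\<rparr>\<^esub> y) = phi x \<otimes>\<^bsub>sym_group 8\<^esub> phi y"
        using s r permutes_compose[OF r s] by (simp add: x y phi_lift sym_group_mult)
    qed
    show "bij_betw phi (carrier (G2\<lparr>carrier := ?H\<rparr>)) (carrier (sym_group 8))"
    proof (rule bij_betw_byWitness[where f'=lift])
      show "\<forall>a\<in>carrier (G2\<lparr>carrier := ?H\<rparr>). lift (phi a) = a"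
        by (auto simp: sym_group_carrier phi_lift)
      show "\<forall>a\<in>carrier (sym_group 8). phi (lift a) = a"
        by (auto simp: sym_group_carrier phi_lift)
      show "phi ` carrier (G2\<lparr>carrier := ?H\<rparr>) \<subseteq> carrier (sym_group 8)"
        by (auto simp: sym_group_carrier phi_lift)
      show "lift ` carrier (sym_group 8) \<subseteq> carrier (G2\<lparr>carrier := ?H\<rparr>)"
        by simp
    qed
  qed
  show ?thesis using subH iso by blast
qed

end
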